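(* Consider an instance of the bipartite stable $b$-matching problem with bipartite graph $G=(U\cup W,E)$, preference lists $L$ and quota function $b$. Let $M_1$ be a $b$-matching with set of blocking pairs $B_1$, and let $(u,w)\in B_1$. Remove the blocking pair $(u,w)$ as follows: if $u$ is full in $M_1$, disconnect $u$ from a worst partner $w'$ of $u$; if $w$ is full in $M_1$, disconnect $w$ from a worst partner $u'$ of $w$; then add the edge $(u,w)$. Call the resulting $b$-matching $M_2$ and its set of blocking pairs $B_2$ (if nothing is disconnected from $u$, $w'$ is undefined; if nothing is disconnected from $w$, $u'$ is undefined). If $B_2\setminus B_1\neq\varnothing$, then at least one of $u'$, $w'$ exists, and every blocking pair in $B_2\setminus B_1$ involves $u'$ or $w'$.
   Context: An instance consists of an undirected bipartite graph $G=(V,E)$ with $V=U\cup W$ ($U,W$ disjoint), a quota function $b:V\to\mathbb{N}$, and for each agent $v\in V$ a preference list $L_v$ over the agents adjacent to $v$ (its candidates); $r_v(x)$ denotes the rank of $x$ in $v$'s list (smaller is better). A $b$-matching $M\subseteq E$ is a set of edges such that each $v$ lies in at most $b(v)$ edges of $M$; $M(v)$ is the set of partners of $v$; $v$ is full if $|M(v)|=b(v)$ and free otherwise; a worst partner of $v$ is an $x\in M(v)$ with $r_v(x)=\max\{r_v(y): y\in M(v)\}$. A pair $(u,w)$ is a blocking pair of $M$ if (i) $u\in L_w$, $w\in L_u$ and $(u,w)\notin M$; (ii) $u$ is free or strictly prefers $w$ to its worst partner in $M$; (iii) $w$ is free or strictly prefers $u$ to its worst partner in $M$. *)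

theory Defs
  imports Main
begin

definition bip_instance ::
  "'a set \<Rightarrow> 'a set \<Rightarrow> ('a \<times> 'a) set \<Rightarrow> ('a \<Rightarrow> nat) \<Rightarrow> ('a \<Rightarrow> 'a list) \<Rightarrow> bool" where
  "bip_instance U W E b L \<longleftrightarrow>
     finite U \<and> finite W \<and> U \<inter> W = {} \<and> E \<subseteq> U \<times> W \<and>
     (\<forall>v \<in> U \<union> W. distinct (L v)) \<and>
     (\<forall>u \<in> U. set (L u) = {w. (u, w) \<in> E}) \<and>
     (\<forall>w \<in> W. set (L w) = {u. (u, w) \<in> E})"

text \<open>Rank of x in v's list (position, smaller is better).\<close>
definition rank :: "('a \<Rightarrow> 'a list) \<Rightarrow> 'a \<Rightarrow> 'a \<Rightarrow> nat" where
  "rank L v x = (LEAST i. i < length (L v) \<and> L v ! i = x)"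

definition partners :: "('a \<times> 'a) set \<Rightarrow> 'a \<Rightarrow> 'a set" where
  "partners M v = {x. (v, x) \<in> M \<or> (x, v) \<in> M}"

definition b_matching :: "('a \<times> 'a) set \<Rightarrow> ('a \<Rightarrow> nat) \<Rightarrow> ('a \<times> 'a) set \<Rightarrow> bool" where
  "b_matching E b M \<longleftrightarrow> M \<subseteq> E \<and> (\<forall>v. card (partners M v) \<le> b v)"

definition full :: "('a \<Rightarrow> nat) \<Rightarrow> ('a \<times> 'a) set \<Rightarrow> 'a \<Rightarrow> bool" where
  "full b M v \<longleftrightarrow> card (partners M v) = b v"

definition worst_partner :: "('a \<Rightarrow> 'a list) \<Rightarrow> ('a \<times> 'a) set \<Rightarrow> 'a \<Rightarrow> 'a \<Rightarrow> bool" where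
  "worst_partner L M v x \<longleftrightarrow> x \<in> partners M v \<and> (\<forall>y \<in> partners M v. rank L v y \<le> rank L v x)"

definition wants :: "('a \<Rightarrow> 'a list) \<Rightarrow> ('a \<Rightarrow> nat) \<Rightarrow> ('a \<times> 'a) set \<Rightarrow> 'a \<Rightarrow> 'a \<Rightarrow> bool" where
  "wants L b M v y \<longleftrightarrow> \<not> full b M v \<or> (\<exists>x. worst_partner L M v x \<and> rank L v y < rank L v x)"

definition blocking_pairs ::
  "'a set \<Rightarrow> 'a set \<Rightarrow> ('a \<Rightarrow> 'a list) \<Rightarrow> ('a \<Rightarrow> nat) \<Rightarrow> ('a \<times> 'a) set \<Rightarrow> ('a \<times> 'a) set" where
  "blocking_pairs U W L b M =
     {(u, w). u \<in> U \<and> w \<in> W \<and> u \<in> set (L w) \<and> w \<in> set (L u) \<and> (u, w) \<notin> M \<and>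
              wants L b M u w \<and> wants L b M w u}"

end

theory Submission
  imports Defs
begin

lemma wants_transfer:
  assumes fin: "finite (partners M1 v)"
    and cs: "partners M2 v = partners M1 v \<or> \<not> full b M1 v \<or>
      (\<exists>a c. full b M1 v \<and> worst_partner L M1 v a \<and> c \<notin> partners M1 v \<and>
         rank L v c < rank L v a \<and> partners M2 v = insert c (partners M1 v - {a}))"
    and wm: "wants L b M2 v y"
  shows "wants L b M1 v y"
proof -
  consider (eq) "partners M2 v = partners M1 v" | (nf) "\<not> full b M1 v" |
    (ch) a c where "full b M1 v" "worst_partner L M1 v a" "c \<notin> partners M1 v"
      "rank L v c < rank L v a" "partners M2 v = insert c (partners M1 v - {a})"
    using cs by blast
  then show ?thesis
  proof cases
    case eq
    then show ?thesis using wm unfolding wants_def full_def worst_partner_def by simp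
  next
    case nf
    then show ?thesis unfolding wants_def by simp
  next
    case ch
    have aP: "a \<in> partners M1 v" using ch(2) unfolding worst_partner_def by simp
    have "card (partners M2 v) = card (partners M1 v)"
      using ch(3,5) aP fin card_gt_0_iff[of "partners M1 v"] by (auto simp add: card_insert_if)
    hence f2: "full b M2 v" using ch(1) unfolding full_def by simp
    then obtain z where z: "worst_partner L M2 v z" "rank L v y < rank L v z"
      using wm unfolding wants_def by blast
    have "z \<in> partners M2 v" using z(1) unfolding worst_partner_def by simp
    hence "rank L v z \<le> rank L v a"
      using ch(2,4,5) unfolding worst_partner_def by auto
    then show ?thesis using z(2) ch(2) unfolding wants_def by (meson order_less_le_trans)
  qed
qed

lemma worst_rank:
  "worst_partner L M v a \<Longrightarrow> worst_partner L M v x \<Longrightarrow> rank L v a = rank L v x"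
  unfolding worst_partner_def by (meson antisym)

lemma partnersU:
  assumes "M \<subseteq> U \<times> W" "x \<in> U" "U \<inter> W = {}"
  shows "partners M x = {z. (x, z) \<in> M}"
  using assms unfolding partners_def by blast

lemma partnersW:
  assumes "M \<subseteq> U \<times> W" "x \<in> W" "U \<inter> W = {}"
  shows "partners M x = {z. (z, x) \<in> M}"
  using assms unfolding partners_def by blast

lemma partners_fin:
  assumes "M \<subseteq> U \<times> W" "finite U" "finite W"
  shows "finite (partners M x)"
proof -
  have "partners M x \<subseteq> U \<union> W" using assms(1) unfolding partners_def by blast
  thus ?thesis using assms by (meson finite_UnI finite_subset)
qed

theorem proposition2:
  fixes U W :: "'a set" and E M1 M2 :: "('a \<times> 'a) set" and b :: "'a \<Rightarrow> nat"
    and L :: "'a \<Rightarrow> 'a list" and u w :: 'a and u' w' :: "'a option"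
  assumes inst: "bip_instance U W E b L"
    and M1: "b_matching E b M1"
    and uw: "(u, w) \<in> blocking_pairs U W L b M1"
    and w'_def: "w' = None \<longleftrightarrow> \<not> full b M1 u"
    and w'_worst: "\<And>x. w' = Some x \<Longrightarrow> worst_partner L M1 u x"
    and u'_def: "u' = None \<longleftrightarrow> \<not> full b M1 w"
    and u'_worst: "\<And>x. u' = Some x \<Longrightarrow> worst_partner L M1 w x"
    and M2: "M2 = (M1 - {(u, x) | x. w' = Some x} - {(x, w) | x. u' = Some x}) \<union> {(u, w)}"
    and new: "blocking_pairs U W L b M2 - blocking_pairs U W L b M1 \<noteq> {}"
  shows "(u' \<noteq> None \<or> w' \<noteq> None) \<and>
         (\<forall>(x, y) \<in> blocking_pairs U W L b M2 - blocking_pairs U W L b M1.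
            (\<exists>z. u' = Some z \<and> z \<in> {x, y}) \<or> (\<exists>z. w' = Some z \<and> z \<in> {x, y}))"
proof -
  have fU: "finite U" and fW: "finite W" and disj: "U \<inter> W = {}" and EUW: "E \<subseteq> U \<times> W"
    using inst unfolding bip_instance_def by auto
  have M1UW: "M1 \<subseteq> U \<times> W" using M1 EUW unfolding b_matching_def by blast
  have uU: "u \<in> U" and wW: "w \<in> W" and uwn: "(u, w) \<notin> M1"
    and wu1: "wants L b M1 u w" and wu2: "wants L b M1 w u"
    using uw unfolding blocking_pairs_def by auto
  have M2UW: "M2 \<subseteq> U \<times> W" using M1UW uU wW M2 by blast
  have TU: "wants L b M1 x y" if xU: "x \<in> U" and xu': "u' \<noteq> Some x"
    and wm: "wants L b M2 x y" for x y
  proof (rule wants_transfer[OF partners_fin[OF M1UW fU fW] _ wm])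
    show "partners M2 x = partners M1 x \<or> \<not> full b M1 x \<or>
      (\<exists>a c. full b M1 x \<and> worst_partner L M1 x a \<and> c \<notin> partners M1 x \<and>
         rank L x c < rank L x a \<and> partners M2 x = insert c (partners M1 x - {a}))"
    proof (cases "x = u")
      case True
      show ?thesis
      proof (cases w')
        case None
        then show ?thesis using w'_def True by simp
      next
        case (Some a)
        have full: "full b M1 u" using w'_def Some by simp
        have wa: "worst_partner L M1 u a" using w'_worst Some by simp
        obtain z where z: "worst_partner L M1 u z" "rank L u w < rank L u z"
          using wu1 full unfolding wants_def by blast
        have r: "rank L u w < rank L u a" using worst_rank[OF wa z(1)] z(2) by simp
        have p: "partners M2 u = insert w (partners M1 u - {a})"
          unfolding partnersU[OF M2UW uU disj] partnersU[OF M1UW uU disj]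
          using M2 Some xu' True by auto
        have "w \<notin> partners M1 u" unfolding partnersU[OF M1UW uU disj] using uwn by simp
        then show ?thesis using True full wa r p by blast
      qed
    next
      case False
      have "partners M2 x = partners M1 x"
        unfolding partnersU[OF M2UW xU disj] partnersU[OF M1UW xU disj]
        using M2 False xu' by auto
      then show ?thesis by simp
    qed
  qed
  have TW: "wants L b M1 y x" if yW: "y \<in> W" and yw': "w' \<noteq> Some y"
    and wm: "wants L b M2 y x" for x y
  proof (rule wants_transfer[OF partners_fin[OF M1UW fU fW] _ wm])
    show "partners M2 y = partners M1 y \<or> \<not> full b M1 y \<or>
      (\<exists>a c. full b M1 y \<and> worst_partner L M1 y a \<and> c \<notin> partners M1 y \<and>
         rank L y c < rank L y a \<and> partners M2 y = insert c (partners M1 y - {a}))"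
    proof (cases "y = w")
      case True
      show ?thesis
      proof (cases u')
        case None
        then show ?thesis using u'_def True by simp
      next
        case (Some a)
        have full: "full b M1 w" using u'_def Some by simp
        have wa: "worst_partner L M1 w a" using u'_worst Some by simp
        obtain z where z: "worst_partner L M1 w z" "rank L w u < rank L w z"
          using wu2 full unfolding wants_def by blast
        have r: "rank L w u < rank L w a" using worst_rank[OF wa z(1)] z(2) by simp
        have p: "partners M2 w = insert u (partners M1 w - {a})"
          unfolding partnersW[OF M2UW wW disj] partnersW[OF M1UW wW disj]
          using M2 Some yw' True by auto
        have "u \<notin> partners M1 w" unfolding partnersW[OF M1UW wW disj] using uwn by simp
        then show ?thesis using True full wa r p by blast
      qed
    next
      case False
      have "partners M2 y = partners M1 y"
        unfolding partnersW[OF M2UW yW disj] partnersW[OF M1UW yW disj]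
        using M2 False yw' by auto
      then show ?thesis by simp
    qed
  qed
  have main: "(x, y) \<in> blocking_pairs U W L b M1"
    if xy: "(x, y) \<in> blocking_pairs U W L b M2" and xu': "u' \<noteq> Some x" and yw': "w' \<noteq> Some y"
    for x y
  proof -
    have xU: "x \<in> U" and yW: "y \<in> W" and n2: "(x, y) \<notin> M2"
      and a1: "wants L b M2 x y" and a2: "wants L b M2 y x"
      and l: "x \<in> set (L y)" "y \<in> set (L x)"
      using xy unfolding blocking_pairs_def by auto
    have n1: "(x, y) \<notin> M1" using n2 M2 xu' yw' by auto
    show ?thesis using TU[OF xU xu' a1] TW[OF yW yw' a2] xU yW n1 l
      unfolding blocking_pairs_def by auto
  qed
  have P1: "u' \<noteq> None \<or> w' \<noteq> None"
  proof (rule ccontr)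
    assume "\<not> (u' \<noteq> None \<or> w' \<noteq> None)"
    hence "blocking_pairs U W L b M2 \<subseteq> blocking_pairs U W L b M1"
      using main by auto
    thus False using new by blast
  qed
  have P2: "\<forall>(x, y) \<in> blocking_pairs U W L b M2 - blocking_pairs U W L b M1.
            (\<exists>z. u' = Some z \<and> z \<in> {x, y}) \<or> (\<exists>z. w' = Some z \<and> z \<in> {x, y})"
    using main by blast
  show ?thesis using P1 P2 by blast
qed

end
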